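(* Let $(X,\mathcal{A},p)$ be a standard Borel probability space, and let $(e_\lambda)_{\lambda\in\Lambda}$ and $(f_\lambda)_{\lambda\in\Lambda}$ be nets (indexed by the same directed set) of measure-preserving, $p$-a.s. idempotent Markov kernels on $(X,\mathcal{A},p)$, converging in the one-sided topology to kernels $e$ and $f$ respectively. If $e_\lambda\le f_\lambda$ for all $\lambda$, then $e\le f$.
   Context: Kernels are identified up to $p$-a.s. equality; composition $(h\circ k)(C\mid x)=\int h(C\mid y)k(dy\mid x)$; $e$ is a.s. idempotent if $e\circ e=e$ a.s. Order: $e\le f$ iff $e\circ f=f\circ e=e$ a.s. One-sided topology: $k_\lambda\to k$ iff $\int_X|k(B\mid x)-k_\lambda(B\mid x)|\,p(dx)\to0$ for every $B\in\mathcal{A}$. *)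

theory Defs
  imports "HOL-Probability.Probability"
begin

definition markov_kernel :: "'a measure \<Rightarrow> ('a \<Rightarrow> 'a measure) \<Rightarrow> bool" where
  "markov_kernel p k \<longleftrightarrow> k \<in> measurable p (prob_algebra p)"

definition kernel_measure_preserving :: "'a measure \<Rightarrow> ('a \<Rightarrow> 'a measure) \<Rightarrow> bool" where
  "kernel_measure_preserving p k \<longleftrightarrow>
     (\<forall>B\<in>sets p. (\<integral>x. measure (k x) B \<partial>p) = measure p B)"

text \<open>Composition (h o k)(C|x) = integral of h(C|y) k(dy|x).\<close>
definition kcomp :: "('a \<Rightarrow> 'a measure) \<Rightarrow> ('a \<Rightarrow> 'a measure) \<Rightarrow> ('a \<Rightarrow> 'a measure)" where
  "kcomp h k = (\<lambda>x. k x \<bind> h)"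

definition kernel_ae_eq :: "'a measure \<Rightarrow> ('a \<Rightarrow> 'a measure) \<Rightarrow> ('a \<Rightarrow> 'a measure) \<Rightarrow> bool" where
  "kernel_ae_eq p k1 k2 \<longleftrightarrow> (\<forall>B\<in>sets p. AE x in p. measure (k1 x) B = measure (k2 x) B)"

definition kernel_idempotent :: "'a measure \<Rightarrow> ('a \<Rightarrow> 'a measure) \<Rightarrow> bool" where
  "kernel_idempotent p e \<longleftrightarrow> kernel_ae_eq p (kcomp e e) e"

definition kernel_le :: "'a measure \<Rightarrow> ('a \<Rightarrow> 'a measure) \<Rightarrow> ('a \<Rightarrow> 'a measure) \<Rightarrow> bool" where
  "kernel_le p e f \<longleftrightarrow> kernel_ae_eq p (kcomp e f) e \<and> kernel_ae_eq p (kcomp f e) e"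

definition directed_set :: "'i set \<Rightarrow> ('i \<Rightarrow> 'i \<Rightarrow> bool) \<Rightarrow> bool" where
  "directed_set \<Lambda> R \<longleftrightarrow> \<Lambda> \<noteq> {} \<and> (\<forall>a\<in>\<Lambda>. R a a) \<and>
     (\<forall>a\<in>\<Lambda>. \<forall>b\<in>\<Lambda>. \<forall>c\<in>\<Lambda>. R a b \<longrightarrow> R b c \<longrightarrow> R a c) \<and>
     (\<forall>a\<in>\<Lambda>. \<forall>b\<in>\<Lambda>. \<exists>c\<in>\<Lambda>. R a c \<and> R b c)"

definition one_sided_conv ::
  "'a measure \<Rightarrow> 'i set \<Rightarrow> ('i \<Rightarrow> 'i \<Rightarrow> bool) \<Rightarrow> ('i \<Rightarrow> 'a \<Rightarrow> 'a measure) \<Rightarrow> ('a \<Rightarrow> 'a measure) \<Rightarrow> bool" where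
  "one_sided_conv p \<Lambda> R kn k \<longleftrightarrow>
     (\<forall>B\<in>sets p. \<forall>\<epsilon>>0. \<exists>l0\<in>\<Lambda>. \<forall>l\<in>\<Lambda>. R l0 l \<longrightarrow>
        (\<integral>x. \<bar>measure (k x) B - measure (kn l x) B\<bar> \<partial>p) < \<epsilon>)"

end

theory Submission
  imports Defs
begin



lemma mk_basic:
  assumes "markov_kernel p k" "x \<in> space p"
  shows "prob_space (k x)" "sets (k x) = sets p"
  using measurable_space[OF assms(1)[unfolded markov_kernel_def] assms(2)]
  by (auto simp: space_prob_algebra)

lemma mk_sub: "markov_kernel p k \<Longrightarrow> k \<in> measurable p (subprob_algebra p)"
  unfolding markov_kernel_def by (rule measurable_prob_algebraD)

lemma mk_meas_fun:
  assumes "markov_kernel p k" "x \<in> space p" "g \<in> borel_measurable p"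
  shows "g \<in> borel_measurable (k x)"
  using assms(3) mk_basic(2)[OF assms(1,2)] by (simp cong: measurable_cong_sets)

lemma mk_comp:
  assumes "markov_kernel p h" "markov_kernel p k" "x \<in> space p" "C \<in> sets p"
  shows "measure (kcomp h k x) C = (\<integral>y. measure (h y) C \<partial>k x)"
proof -
  interpret prob_space "k x" using mk_basic[OF assms(2,3)] by simp
  have "h \<in> measurable (k x) (subprob_algebra p)"
    using mk_sub[OF assms(1)] mk_basic(2)[OF assms(2,3)] by (simp cong: measurable_cong_sets)
  then show ?thesis unfolding kcomp_def by (rule measure_bind) (rule assms(4))
qed

lemma mk_int_meas:
  fixes g :: "'a \<Rightarrow> real"
  assumes "markov_kernel p k" "g \<in> borel_measurable p"
  shows "(\<lambda>x. \<integral>y. g y \<partial>k x) \<in> borel_measurable p"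
  using measurable_compose[OF mk_sub[OF assms(1)] integral_measurable_subprob_algebra[OF assms(2)]] .

lemma mk_mB:
  assumes "markov_kernel p k" "B \<in> sets p"
  shows "(\<lambda>x. measure (k x) B) \<in> borel_measurable p"
  using measurable_compose[OF assms(1)[unfolded markov_kernel_def] measurable_measure_prob_algebra[OF assms(2)]] .

lemma prob_abs_int_bound:
  fixes g :: "'a \<Rightarrow> real"
  assumes "prob_space M" "g \<in> borel_measurable M" "\<And>y. y \<in> space M \<Longrightarrow> \<bar>g y\<bar> \<le> c"
  shows "\<bar>\<integral>y. g y \<partial>M\<bar> \<le> c"
proof -
  interpret prob_space M by fact
  obtain y0 where "y0 \<in> space M" using not_empty by blast
  then have c0: "0 \<le> c" using assms(3)[of y0] by simp
  have "\<bar>\<integral>y. g y \<partial>M\<bar> \<le> (\<integral>y. \<bar>g y\<bar> \<partial>M)" using integral_norm_bound[of M g] by simp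
  also have "\<dots> \<le> (\<integral>y. c \<partial>M)"
    using assms c0 by (intro integral_mono integrable_const_bound[where B=c]) auto
  also have "\<dots> = c" by (simp add: prob_space)
  finally show ?thesis .
qed

lemma prob_integrable_bound:
  fixes g :: "'a \<Rightarrow> real"
  assumes "prob_space M" "g \<in> borel_measurable M" "\<And>y. y \<in> space M \<Longrightarrow> \<bar>g y\<bar> \<le> c"
  shows "integrable M g"
proof -
  interpret prob_space M by fact
  show ?thesis using assms by (intro integrable_const_bound[where B=c]) auto
qed

lemma mp_bind:
  assumes "prob_space p" "markov_kernel p k" "kernel_measure_preserving p k"
  shows "p \<bind> k = p"
proof -
  interpret prob_space p by fact
  have ne: "space p \<noteq> {}" by (simp add: not_empty)
  have sets: "sets (p \<bind> k) = sets p"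
    using mk_basic(2)[OF assms(2)] ne by (rule sets_bind)
  interpret pk: prob_space "p \<bind> k"
    by (rule prob_space_bind[OF _ mk_sub[OF assms(2)]]) (auto simp: mk_basic[OF assms(2)])
  show ?thesis
  proof (rule measure_eqI[OF sets])
    fix A assume A: "A \<in> sets (p \<bind> k)"
    then have A': "A \<in> sets p" using sets by simp
    have "measure (p \<bind> k) A = measure p A"
      using measure_bind[OF mk_sub[OF assms(2)] A'] assms(3) A' unfolding kernel_measure_preserving_def by simp
    then show "emeasure (p \<bind> k) A = emeasure p A"
      by (simp add: emeasure_eq_measure pk.emeasure_eq_measure)
  qed
qed




lemma mp_integral:
  fixes g :: "'a \<Rightarrow> real"
  assumes "prob_space p" "markov_kernel p k" "kernel_measure_preserving p k"
    and g: "g \<in> borel_measurable p" "\<And>y. y \<in> space p \<Longrightarrow> 0 \<le> g y \<and> g y \<le> c"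
  shows "(\<integral>x. (\<integral>y. g y \<partial>k x) \<partial>p) = (\<integral>y. g y \<partial>p)"
proof -
  interpret prob_space p by fact
  have gb: "\<And>y. y \<in> space p \<Longrightarrow> \<bar>g y\<bar> \<le> c" using g(2) by fastforce
  have ik: "integrable (k x) g" "\<And>y. y \<in> space (k x) \<Longrightarrow> 0 \<le> g y" if x: "x \<in> space p" for x
  proof -
    have sp: "space (k x) = space p" using mk_basic(2)[OF assms(2) x] by (rule sets_eq_imp_space_eq)
    show "integrable (k x) g"
      using mk_basic(1)[OF assms(2) x] mk_meas_fun[OF assms(2) x g(1)] gb
      by (intro prob_integrable_bound[where c=c]) (auto simp: sp)
    show "\<And>y. y \<in> space (k x) \<Longrightarrow> 0 \<le> g y" using g(2) sp by auto
  qed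
  have ib: "\<bar>\<integral>y. g y \<partial>k x\<bar> \<le> c" if x: "x \<in> space p" for x
  proof -
    have sp: "space (k x) = space p" using mk_basic(2)[OF assms(2) x] by (rule sets_eq_imp_space_eq)
    show ?thesis using mk_basic(1)[OF assms(2) x] mk_meas_fun[OF assms(2) x g(1)] gb
      by (intro prob_abs_int_bound) (auto simp: sp)
  qed
  have "ennreal (\<integral>y. g y \<partial>p) = (\<integral>\<^sup>+y. ennreal (g y) \<partial>p)"
    using g gb by (intro nn_integral_eq_integral[symmetric] prob_integrable_bound[where c=c]) (auto intro: prob_space_axioms)
  also have "\<dots> = (\<integral>\<^sup>+y. ennreal (g y) \<partial>(p \<bind> k))"
    using mp_bind[OF assms(1-3)] by simp
  also have "\<dots> = (\<integral>\<^sup>+x. \<integral>\<^sup>+y. ennreal (g y) \<partial>k x \<partial>p)"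
    using g(1) by (intro nn_integral_bind[OF _ mk_sub[OF assms(2)]]) simp
  also have "\<dots> = (\<integral>\<^sup>+x. ennreal (\<integral>y. g y \<partial>k x) \<partial>p)"
    using ik by (intro nn_integral_cong nn_integral_eq_integral) (auto intro: AE_I2)
  also have "\<dots> = ennreal (\<integral>x. (\<integral>y. g y \<partial>k x) \<partial>p)"
    using ik ib mk_int_meas[OF assms(2) g(1)]
    by (intro nn_integral_eq_integral prob_integrable_bound[where c=c] AE_I2 integral_nonneg_AE)
       (auto intro: prob_space_axioms AE_I2)
  finally have "ennreal (\<integral>y. g y \<partial>p) = ennreal (\<integral>x. (\<integral>y. g y \<partial>k x) \<partial>p)" .
  moreover have "0 \<le> (\<integral>y. g y \<partial>p)" using g(2) by (intro integral_nonneg_AE AE_I2) auto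
  moreover have "0 \<le> (\<integral>x. (\<integral>y. g y \<partial>k x) \<partial>p)"
    using ik by (intro integral_nonneg_AE AE_I2 integral_nonneg_AE) (auto intro: AE_I2)
  ultimately show ?thesis by simp
qed




definition netF :: "'i set \<Rightarrow> ('i \<Rightarrow> 'i \<Rightarrow> bool) \<Rightarrow> 'i filter" where
  "netF \<Lambda> R = (INF l0\<in>\<Lambda>. principal {l\<in>\<Lambda>. R l0 l})"

lemma eventually_netF:
  assumes "directed_set \<Lambda> R"
  shows "eventually P (netF \<Lambda> R) \<longleftrightarrow> (\<exists>l0\<in>\<Lambda>. \<forall>l\<in>\<Lambda>. R l0 l \<longrightarrow> P l)"
proof -
  have "eventually P (netF \<Lambda> R) \<longleftrightarrow> (\<exists>l0\<in>\<Lambda>. eventually P (principal {l\<in>\<Lambda>. R l0 l}))"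
    unfolding netF_def
  proof (rule eventually_INF_base)
    show "\<Lambda> \<noteq> {}" using assms by (simp add: directed_set_def)
    fix a b assume "a \<in> \<Lambda>" "b \<in> \<Lambda>"
    then obtain c where c: "c \<in> \<Lambda>" "R a c" "R b c" using assms unfolding directed_set_def by blast
    have tr: "\<forall>a\<in>\<Lambda>. \<forall>b\<in>\<Lambda>. \<forall>c\<in>\<Lambda>. R a b \<longrightarrow> R b c \<longrightarrow> R a c"
      using assms unfolding directed_set_def by blast
    have "{l\<in>\<Lambda>. R c l} \<subseteq> {l\<in>\<Lambda>. R a l} \<inter> {l\<in>\<Lambda>. R b l}"
    proof
      fix l assume "l \<in> {l\<in>\<Lambda>. R c l}"
      then show "l \<in> {l\<in>\<Lambda>. R a l} \<inter> {l\<in>\<Lambda>. R b l}"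
        using tr c \<open>a \<in> \<Lambda>\<close> \<open>b \<in> \<Lambda>\<close> by blast
    qed
    then have "principal {l\<in>\<Lambda>. R c l} \<le> inf (principal {l\<in>\<Lambda>. R a l}) (principal {l\<in>\<Lambda>. R b l})"
      by (simp add: inf_principal)
    then show "\<exists>x\<in>\<Lambda>. principal {l\<in>\<Lambda>. R x l} \<le> inf (principal {l\<in>\<Lambda>. R a l}) (principal {l\<in>\<Lambda>. R b l})"
      using c by blast
  qed
  then show ?thesis by (simp add: eventually_principal) blast
qed

lemma netF_nontriv:
  assumes "directed_set \<Lambda> R"
  shows "\<not> trivial_limit (netF \<Lambda> R)"
proof
  assume "trivial_limit (netF \<Lambda> R)"
  then obtain l0 where "l0 \<in> \<Lambda>" "\<forall>l\<in>\<Lambda>. R l0 l \<longrightarrow> False"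
    unfolding trivial_limit_def eventually_netF[OF assms] by blast
  moreover have "R l0 l0" using assms \<open>l0 \<in> \<Lambda>\<close> unfolding directed_set_def by blast
  ultimately show False by blast
qed

lemma netF_in:
  assumes "directed_set \<Lambda> R"
  shows "eventually (\<lambda>l. l \<in> \<Lambda>) (netF \<Lambda> R)"
proof -
  obtain l0 where "l0 \<in> \<Lambda>" using assms unfolding directed_set_def by blast
  then show ?thesis unfolding eventually_netF[OF assms] by blast
qed

lemma one_sided_tendsto:
  assumes "directed_set \<Lambda> R" "one_sided_conv p \<Lambda> R kn k" "B \<in> sets p"
  shows "((\<lambda>l. \<integral>x. \<bar>measure (k x) B - measure (kn l x) B\<bar> \<partial>p) \<longlongrightarrow> 0) (netF \<Lambda> R)"
proof (rule tendstoI)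
  fix \<epsilon> :: real assume "\<epsilon> > 0"
  then obtain l0 where "l0 \<in> \<Lambda>" "\<forall>l\<in>\<Lambda>. R l0 l \<longrightarrow> (\<integral>x. \<bar>measure (k x) B - measure (kn l x) B\<bar> \<partial>p) < \<epsilon>"
    using assms(2,3) unfolding one_sided_conv_def by blast
  then show "eventually (\<lambda>l. dist (\<integral>x. \<bar>measure (k x) B - measure (kn l x) B\<bar> \<partial>p) 0 < \<epsilon>) (netF \<Lambda> R)"
    unfolding eventually_netF[OF assms(1)] by (auto simp: dist_real_def)
qed




lemma floor_approx_sum:
  fixes t :: real and n :: nat
  assumes "0 \<le> t" "t \<le> 1" "n > 0"
  shows "\<bar>t - (\<Sum>i\<in>{1..n}. if real i \<le> real n * t then 1 else 0) / real n\<bar> \<le> 1 / real n"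
proof -
  define m where "m = nat \<lfloor>real n * t\<rfloor>"
  have nt: "0 \<le> real n * t" "real n * t \<le> real n" using assms by (auto simp: mult_left_le)
  have fl0: "0 \<le> \<lfloor>real n * t\<rfloor>" using nt by simp
  have rm: "real m = real_of_int \<lfloor>real n * t\<rfloor>" using fl0 by (simp add: m_def)
  have "\<lfloor>real n * t\<rfloor> \<le> int n" using floor_mono[OF nt(2)] by simp
  then have mn: "m \<le> n" unfolding m_def by (simp add: nat_le_iff)
  have eq: "{i\<in>{1..n}. real i \<le> real n * t} = {1..m}"
  proof -
    have "real i \<le> real n * t \<longleftrightarrow> i \<le> m" for i
    proof -
      have "real i \<le> real n * t \<longleftrightarrow> int i \<le> \<lfloor>real n * t\<rfloor>" using le_floor_iff[of "int i" "real n * t"] by (metis of_int_of_nat_eq)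
      also have "\<dots> \<longleftrightarrow> i \<le> m" unfolding m_def using le_nat_iff[OF fl0, of i] by blast
      finally show ?thesis .
    qed
    then have "{i\<in>{1..n}. real i \<le> real n * t} = {i\<in>{1..n}. i \<le> m}" by blast
    also have "\<dots> = {1..m}" using mn by auto
    finally show ?thesis .
  qed
  have "(\<Sum>i\<in>{1..n}. if real i \<le> real n * t then 1 else 0 :: real) = (\<Sum>i\<in>{i\<in>{1..n}. real i \<le> real n * t}. 1)"
    by (rule sum.inter_filter[symmetric]) simp
  also have "\<dots> = real m" unfolding eq by simp
  finally have S: "(\<Sum>i\<in>{1..n}. if real i \<le> real n * t then 1 else 0 :: real) = real m" .
  have a: "real m \<le> real n * t" "real n * t < real m + 1" using rm by linarith+
  have "t - real m / real n = (real n * t - real m) / real n" using assms by (simp add: field_simps)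
  moreover have "0 \<le> (real n * t - real m) / real n" "(real n * t - real m) / real n \<le> 1 / real n"
    using a assms by (simp_all add: divide_right_mono)
  ultimately show ?thesis unfolding S by simp
qed




lemma conv_bounded:
  fixes g :: "'a \<Rightarrow> real"
  assumes P: "prob_space p" and dir: "directed_set \<Lambda> R" and mk: "markov_kernel p k"
    and mkn: "\<And>l. l \<in> \<Lambda> \<Longrightarrow> markov_kernel p (kn l)"
    and cv: "one_sided_conv p \<Lambda> R kn k"
    and gm[measurable]: "g \<in> borel_measurable p" and gb: "\<And>y. y \<in> space p \<Longrightarrow> 0 \<le> g y \<and> g y \<le> 1"
  shows "((\<lambda>l. \<integral>x. \<bar>(\<integral>y. g y \<partial>k x) - (\<integral>y. g y \<partial>kn l x)\<bar> \<partial>p) \<longlongrightarrow> 0) (netF \<Lambda> R)"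
proof (rule tendstoI)
  interpret prob_space p by fact
  fix \<epsilon> :: real assume \<epsilon>: "\<epsilon> > 0"
  obtain n :: nat where n: "2 / \<epsilon> < real n" using reals_Archimedean2 by blast
  have npos: "n > 0" using n \<epsilon> by (metis divide_pos_pos of_nat_0 of_nat_0_less_iff zero_less_numeral order.strict_trans)
  have n2: "2 / real n < \<epsilon>" using n \<epsilon> npos by (simp add: field_simps)
  define A where "A i = {y\<in>space p. real i \<le> real n * g y}" for i :: nat
  have A[measurable]: "A i \<in> sets p" for i unfolding A_def by measurable
  define s where "s y = (\<Sum>i\<in>{1..n}. indicator (A i) y) / real n" for y :: 'a
  have s_eq: "s y = (\<Sum>i\<in>{1..n}. if real i \<le> real n * g y then 1 else 0) / real n" if "y \<in> space p" for y
    unfolding s_def A_def using that by (intro arg_cong[where f="\<lambda>z. z / real n"] sum.cong refl) (simp add: indicator_def)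
  have sapp: "\<bar>g y - s y\<bar> \<le> 1 / real n" if "y \<in> space p" for y
    unfolding s_eq[OF that] using floor_approx_sum[of "g y" n] gb[OF that] npos by simp
  have sm[measurable]: "s \<in> borel_measurable p" unfolding s_def by measurable
  have key: "\<bar>(\<integral>y. g y \<partial>K x) - (\<Sum>i\<in>{1..n}. measure (K x) (A i)) / real n\<bar> \<le> 1 / real n"
    if K: "markov_kernel p K" and x: "x \<in> space p" for K x
  proof -
    interpret K: prob_space "K x" using mk_basic(1)[OF K x] .
    have sp: "space (K x) = space p" using mk_basic(2)[OF K x] by (rule sets_eq_imp_space_eq)
    have sK: "sets (K x) = sets p" using mk_basic(2)[OF K x] .
    have AK: "A i \<in> sets (K x)" for i using A sK by simp
    have "(\<integral>y. s y \<partial>K x) = (\<integral>y. (\<Sum>i\<in>{1..n}. indicator (A i) y) \<partial>K x) / real n"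
      unfolding s_def by simp
    also have "(\<integral>y. (\<Sum>i\<in>{1..n}. indicator (A i) y :: real) \<partial>K x) = (\<Sum>i\<in>{1..n}. (\<integral>y. indicator (A i) y \<partial>K x))"
      using AK by (intro Bochner_Integration.integral_sum integrable_real_indicator AK) (simp add: less_top[symmetric] K.emeasure_finite)
    also have "\<dots> = (\<Sum>i\<in>{1..n}. measure (K x) (A i))"
      using AK by (intro sum.cong refl) (simp add: sets.Int_space_eq2)
    finally have isx: "(\<integral>y. s y \<partial>K x) = (\<Sum>i\<in>{1..n}. measure (K x) (A i)) / real n" .
    have gK: "g \<in> borel_measurable (K x)" using mk_meas_fun[OF K x gm] .
    have sK': "s \<in> borel_measurable (K x)" using mk_meas_fun[OF K x sm] .
    have ig: "integrable (K x) g" using gb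
      by (intro prob_integrable_bound[OF K.prob_space_axioms gK, where c=1]) (auto simp: sp)
    have n1: "1 / real n \<le> 1" using npos by simp
    have "\<bar>s y\<bar> \<le> 2" if "y \<in> space p" for y using sapp[OF that] gb[OF that] n1
      by (smt (verit))
    then have iss: "integrable (K x) s"
      by (intro prob_integrable_bound[OF K.prob_space_axioms sK', where c=2]) (auto simp: sp)
    have "(\<integral>y. g y \<partial>K x) - (\<integral>y. s y \<partial>K x) = (\<integral>y. g y - s y \<partial>K x)"
      using ig iss by simp
    also have "\<bar>\<dots>\<bar> \<le> 1 / real n"
      using sapp gK sK' by (intro prob_abs_int_bound[OF K.prob_space_axioms]) (auto simp: sp)
    finally show ?thesis unfolding isx .
  qed
  define D where "D l i = (\<integral>x. \<bar>measure (k x) (A i) - measure (kn l x) (A i)\<bar> \<partial>p)" for l i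
  have bound: "(\<integral>x. \<bar>(\<integral>y. g y \<partial>k x) - (\<integral>y. g y \<partial>kn l x)\<bar> \<partial>p) \<le> 2 / real n + (\<Sum>i\<in>{1..n}. D l i) / real n"
    if l: "l \<in> \<Lambda>" for l
  proof -
    note mkl = mkn[OF l]
    have [measurable]: "(\<lambda>x. \<integral>y. g y \<partial>k x) \<in> borel_measurable p" using mk_int_meas[OF mk gm] .
    have [measurable]: "(\<lambda>x. \<integral>y. g y \<partial>kn l x) \<in> borel_measurable p" using mk_int_meas[OF mkl gm] .
    have [measurable]: "(\<lambda>x. measure (k x) (A i)) \<in> borel_measurable p" for i using mk_mB[OF mk A] .
    have [measurable]: "(\<lambda>x. measure (kn l x) (A i)) \<in> borel_measurable p" for i using mk_mB[OF mkl A] .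
    have bK: "\<bar>\<integral>y. g y \<partial>K x\<bar> \<le> 1" if "markov_kernel p K" "x \<in> space p" for K x
      using prob_abs_int_bound[OF mk_basic(1)[OF that] mk_meas_fun[OF that gm], of 1] gb
        sets_eq_imp_space_eq[OF mk_basic(2)[OF that]] by auto
    have mK: "\<bar>measure (K x) B\<bar> \<le> 1" if "markov_kernel p K" "x \<in> space p" for K x B
      using prob_space.prob_le_1[OF mk_basic(1)[OF that]] by simp
    have b2: "\<bar>\<bar>(\<integral>y. g y \<partial>k x) - (\<integral>y. g y \<partial>kn l x)\<bar>\<bar> \<le> 2" if x: "x \<in> space p" for x
      using bK[OF mk x] bK[OF mkl x] by (smt (verit))
    have int1: "integrable p (\<lambda>x. \<bar>(\<integral>y. g y \<partial>k x) - (\<integral>y. g y \<partial>kn l x)\<bar>)"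
      using b2 by (intro prob_integrable_bound[OF P, where c=2]) auto
    have b3: "\<bar>\<bar>measure (k x) (A i) - measure (kn l x) (A i)\<bar>\<bar> \<le> 2" if x: "x \<in> space p" for x i
      using mK[OF mk x, of "A i"] mK[OF mkl x, of "A i"] by (smt (verit))
    have int2: "integrable p (\<lambda>x. \<bar>measure (k x) (A i) - measure (kn l x) (A i)\<bar>)" for i
      using b3 by (intro prob_integrable_bound[OF P, where c=2]) auto
    have int4: "integrable p (\<lambda>x. (\<Sum>i\<in>{1..n}. \<bar>measure (k x) (A i) - measure (kn l x) (A i)\<bar>) / real n)"
      by (intro integrable_divide_zero Bochner_Integration.integrable_sum int2)
    have int3: "integrable p (\<lambda>x. 2 / real n + (\<Sum>i\<in>{1..n}. \<bar>measure (k x) (A i) - measure (kn l x) (A i)\<bar>) / real n)"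
      by (intro Bochner_Integration.integrable_add integrable_const int4)
    have pw: "\<bar>(\<integral>y. g y \<partial>k x) - (\<integral>y. g y \<partial>kn l x)\<bar>
        \<le> 2 / real n + (\<Sum>i\<in>{1..n}. \<bar>measure (k x) (A i) - measure (kn l x) (A i)\<bar>) / real n"
      if x: "x \<in> space p" for x
    proof -
      have "\<bar>(\<Sum>i\<in>{1..n}. measure (k x) (A i)) / real n - (\<Sum>i\<in>{1..n}. measure (kn l x) (A i)) / real n\<bar>
          = \<bar>\<Sum>i\<in>{1..n}. measure (k x) (A i) - measure (kn l x) (A i)\<bar> / real n"
        by (simp add: sum_subtractf diff_divide_distrib[symmetric])
      also have "\<dots> \<le> (\<Sum>i\<in>{1..n}. \<bar>measure (k x) (A i) - measure (kn l x) (A i)\<bar>) / real n"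
        by (intro divide_right_mono sum_abs) simp
      finally show ?thesis using key[OF mk x] key[OF mkl x] by (simp add: add_divide_distrib)
    qed
    have "(\<integral>x. \<bar>(\<integral>y. g y \<partial>k x) - (\<integral>y. g y \<partial>kn l x)\<bar> \<partial>p)
        \<le> (\<integral>x. 2 / real n + (\<Sum>i\<in>{1..n}. \<bar>measure (k x) (A i) - measure (kn l x) (A i)\<bar>) / real n \<partial>p)"
      by (rule integral_mono[OF int1 int3 pw])
    also have "\<dots> = (\<integral>x. 2 / real n \<partial>p) + (\<integral>x. (\<Sum>i\<in>{1..n}. \<bar>measure (k x) (A i) - measure (kn l x) (A i)\<bar>) / real n \<partial>p)"
      by (rule Bochner_Integration.integral_add[OF integrable_const int4])
    also have "(\<integral>x. (\<Sum>i\<in>{1..n}. \<bar>measure (k x) (A i) - measure (kn l x) (A i)\<bar>) / real n \<partial>p)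
       = (\<integral>x. (\<Sum>i\<in>{1..n}. \<bar>measure (k x) (A i) - measure (kn l x) (A i)\<bar>) \<partial>p) / real n"
      by (rule integral_divide_zero)
    also have "(\<integral>x. (\<Sum>i\<in>{1..n}. \<bar>measure (k x) (A i) - measure (kn l x) (A i)\<bar>) \<partial>p) = (\<Sum>i\<in>{1..n}. D l i)"
      unfolding D_def by (rule Bochner_Integration.integral_sum[OF int2])
    also have "(\<integral>x. 2 / real n \<partial>p) = 2 / real n" by (simp add: prob_space)
    finally show ?thesis .
  qed
  have "((\<lambda>l. 2 / real n + (\<Sum>i\<in>{1..n}. D l i) / real n) \<longlongrightarrow> 2 / real n + (\<Sum>i\<in>{1..n}. 0) / real n) (netF \<Lambda> R)"
    unfolding D_def
    using npos by (intro tendsto_intros one_sided_tendsto[OF dir cv A]) simp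
  then have "eventually (\<lambda>l. 2 / real n + (\<Sum>i\<in>{1..n}. D l i) / real n < \<epsilon>) (netF \<Lambda> R)"
    using n2 by (intro order_tendstoD(2)) auto
  then show "eventually (\<lambda>l. dist (\<integral>x. \<bar>(\<integral>y. g y \<partial>k x) - (\<integral>y. g y \<partial>kn l x)\<bar> \<partial>p) 0 < \<epsilon>) (netF \<Lambda> R)"
    using netF_in[OF dir]
  proof eventually_elim
    case (elim l)
    have "0 \<le> (\<integral>x. \<bar>(\<integral>y. g y \<partial>k x) - (\<integral>y. g y \<partial>kn l x)\<bar> \<partial>p)" by simp
    then show ?case using bound[OF elim(2)] elim(1) by (simp add: dist_real_def)
  qed
qed




lemma main_ae:
  assumes P: "prob_space p" and dir: "directed_set \<Lambda> R" and B: "B \<in> sets p"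
    and mk: "markov_kernel p k" and mkk': "markov_kernel p kk'" and mj: "markov_kernel p j"
    and cvk: "one_sided_conv p \<Lambda> R kn k" and cvkk: "one_sided_conv p \<Lambda> R kk kk'"
    and cvj: "one_sided_conv p \<Lambda> R jj j"
    and mkn: "\<And>l. l \<in> \<Lambda> \<Longrightarrow> markov_kernel p (kn l) \<and> kernel_measure_preserving p (kn l)"
    and mkk: "\<And>l. l \<in> \<Lambda> \<Longrightarrow> markov_kernel p (kk l)"
    and mjj: "\<And>l. l \<in> \<Lambda> \<Longrightarrow> markov_kernel p (jj l)"
    and ae: "\<And>l. l \<in> \<Lambda> \<Longrightarrow> AE x in p. (\<integral>y. measure (kk l y) B \<partial>kn l x) = measure (jj l x) B"
  shows "AE x in p. (\<integral>y. measure (kk' y) B \<partial>k x) = measure (j x) B"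
proof -
  interpret prob_space p by fact
  define h where "h y = measure (kk' y) B" for y
  define a where "a x = (\<integral>y. h y \<partial>k x)" for x
  define b where "b x = measure (j x) B" for x
  have m1: "\<bar>measure (K x) B\<bar> \<le> 1" "0 \<le> measure (K x) B" "measure (K x) B \<le> 1"
    if "markov_kernel p K" "x \<in> space p" for K x
    using prob_space.prob_le_1[OF mk_basic(1)[OF that]] by auto
  have hm[measurable]: "h \<in> borel_measurable p" unfolding h_def by (rule mk_mB[OF mkk' B])
  have hb: "0 \<le> h y \<and> h y \<le> 1" if "y \<in> space p" for y unfolding h_def using m1[OF mkk' that] by simp
  have am[measurable]: "a \<in> borel_measurable p" unfolding a_def by (rule mk_int_meas[OF mk hm])
  have bm[measurable]: "b \<in> borel_measurable p" unfolding b_def by (rule mk_mB[OF mj B])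
  have ab: "\<bar>a x\<bar> \<le> 1" if x: "x \<in> space p" for x
    unfolding a_def using prob_abs_int_bound[OF mk_basic(1)[OF mk x] mk_meas_fun[OF mk x hm], of 1] hb
      sets_eq_imp_space_eq[OF mk_basic(2)[OF mk x]] by auto
  have bb: "\<bar>b x\<bar> \<le> 1" if x: "x \<in> space p" for x unfolding b_def using m1[OF mj x] by simp
  have b_a_b: "\<bar>\<bar>a x - b x\<bar>\<bar> \<le> 2" if x: "x \<in> space p" for x using ab[OF x] bb[OF x] by (smt (verit))
  define G where "G = (\<integral>x. \<bar>a x - b x\<bar> \<partial>p)"
  define T1 where "T1 l = (\<integral>x. \<bar>(\<integral>y. h y \<partial>k x) - (\<integral>y. h y \<partial>kn l x)\<bar> \<partial>p)" for l
  define T2 where "T2 l = (\<integral>y. \<bar>measure (kk' y) B - measure (kk l y) B\<bar> \<partial>p)" for l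
  define T3 where "T3 l = (\<integral>x. \<bar>measure (j x) B - measure (jj l x) B\<bar> \<partial>p)" for l
  have bound: "G \<le> T1 l + T2 l + T3 l" if l: "l \<in> \<Lambda>" for l
  proof -
    have mkl: "markov_kernel p (kn l)" and mpl: "kernel_measure_preserving p (kn l)" using mkn[OF l] by auto
    define hl where "hl y = measure (kk l y) B" for y
    have hlm[measurable]: "hl \<in> borel_measurable p" unfolding hl_def by (rule mk_mB[OF mkk[OF l] B])
    have hlb: "0 \<le> hl y \<and> hl y \<le> 1" if "y \<in> space p" for y unfolding hl_def using m1[OF mkk[OF l] that] by simp
    define c where "c x = (\<integral>y. h y \<partial>kn l x)" for x
    define d where "d x = (\<integral>y. \<bar>h y - hl y\<bar> \<partial>kn l x)" for x
    define jl where "jl x = measure (jj l x) B" for x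
    have cm[measurable]: "c \<in> borel_measurable p" unfolding c_def by (rule mk_int_meas[OF mkl hm])
    have dm[measurable]: "d \<in> borel_measurable p" unfolding d_def by (rule mk_int_meas[OF mkl]) measurable
    have jlm[measurable]: "jl \<in> borel_measurable p" unfolding jl_def by (rule mk_mB[OF mjj[OF l] B])
    have cb: "\<bar>c x\<bar> \<le> 1" if x: "x \<in> space p" for x
      unfolding c_def using prob_abs_int_bound[OF mk_basic(1)[OF mkl x] mk_meas_fun[OF mkl x hm], of 1] hb
        sets_eq_imp_space_eq[OF mk_basic(2)[OF mkl x]] by auto
    have hd: "\<bar>\<bar>h y - hl y\<bar>\<bar> \<le> 1" if "y \<in> space p" for y using hb[OF that] hlb[OF that] by auto
    have db: "\<bar>d x\<bar> \<le> 1" if x: "x \<in> space p" for x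
      unfolding d_def using prob_abs_int_bound[OF mk_basic(1)[OF mkl x] mk_meas_fun[OF mkl x], of "\<lambda>y. \<bar>h y - hl y\<bar>" 1] hd
        sets_eq_imp_space_eq[OF mk_basic(2)[OF mkl x]] by auto
    have jlb: "\<bar>jl x\<bar> \<le> 1" if x: "x \<in> space p" for x unfolding jl_def using m1[OF mjj[OF l] x] by simp
    have pw: "AE x in p. \<bar>a x - b x\<bar> \<le> \<bar>a x - c x\<bar> + d x + \<bar>b x - jl x\<bar>"
      using ae[OF l]
    proof (rule AE_mp)
      show "AE x in p. (\<integral>y. measure (kk l y) B \<partial>kn l x) = measure (jj l x) B \<longrightarrow>
          \<bar>a x - b x\<bar> \<le> \<bar>a x - c x\<bar> + d x + \<bar>b x - jl x\<bar>"
      proof (rule AE_I2, rule impI)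
        fix x assume x: "x \<in> space p" and eq: "(\<integral>y. measure (kk l y) B \<partial>kn l x) = measure (jj l x) B"
        interpret K: prob_space "kn l x" using mk_basic(1)[OF mkl x] .
        have sp: "space (kn l x) = space p" using sets_eq_imp_space_eq[OF mk_basic(2)[OF mkl x]] .
        have ih: "integrable (kn l x) h"
          using hb by (intro prob_integrable_bound[OF K.prob_space_axioms mk_meas_fun[OF mkl x hm], where c=1]) (auto simp: sp)
        have ihl: "integrable (kn l x) hl"
          using hlb by (intro prob_integrable_bound[OF K.prob_space_axioms mk_meas_fun[OF mkl x hlm], where c=1]) (auto simp: sp)
        have "c x - jl x = (\<integral>y. h y - hl y \<partial>kn l x)"
          unfolding c_def jl_def eq[symmetric] hl_def[symmetric] using ih ihl by simp
        also have "\<bar>\<dots>\<bar> \<le> d x" unfolding d_def using integral_norm_bound[of "kn l x" "\<lambda>y. h y - hl y"] by simp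
        finally have "\<bar>c x - jl x\<bar> \<le> d x" .
        then show "\<bar>a x - b x\<bar> \<le> \<bar>a x - c x\<bar> + d x + \<bar>b x - jl x\<bar>" by linarith
      qed
    qed
    have b_a_c: "\<bar>\<bar>a x - c x\<bar>\<bar> \<le> 2" if x: "x \<in> space p" for x using ab[OF x] cb[OF x] by (smt (verit))
    have b_b_jl: "\<bar>\<bar>b x - jl x\<bar>\<bar> \<le> 2" if x: "x \<in> space p" for x using bb[OF x] jlb[OF x] by (smt (verit))
    have i1: "integrable p (\<lambda>x. \<bar>a x - b x\<bar>)"
      using b_a_b by (intro prob_integrable_bound[OF P, where c=2]) auto
    have i2: "integrable p (\<lambda>x. \<bar>a x - c x\<bar>)"
      using b_a_c by (intro prob_integrable_bound[OF P, where c=2]) auto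
    have i3: "integrable p d" using db by (intro prob_integrable_bound[OF P, where c=1]) auto
    have i4: "integrable p (\<lambda>x. \<bar>b x - jl x\<bar>)"
      using b_b_jl by (intro prob_integrable_bound[OF P, where c=2]) auto
    have "G \<le> (\<integral>x. \<bar>a x - c x\<bar> + d x + \<bar>b x - jl x\<bar> \<partial>p)"
      unfolding G_def by (rule integral_mono_AE[OF i1 _ pw]) (intro Bochner_Integration.integrable_add i2 i3 i4)
    also have "\<dots> = (\<integral>x. \<bar>a x - c x\<bar> \<partial>p) + (\<integral>x. d x \<partial>p) + (\<integral>x. \<bar>b x - jl x\<bar> \<partial>p)"
      using i2 i3 i4 by simp
    also have "(\<integral>x. \<bar>a x - c x\<bar> \<partial>p) = T1 l" unfolding T1_def a_def c_def ..
    also have "(\<integral>x. \<bar>b x - jl x\<bar> \<partial>p) = T3 l" unfolding T3_def b_def jl_def ..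
    also have "(\<integral>x. d x \<partial>p) = (\<integral>y. \<bar>h y - hl y\<bar> \<partial>p)"
      unfolding d_def by (rule mp_integral[OF P mkl mpl, where c=1], measurable) (use hd in auto)
    also have "\<dots> = T2 l" unfolding T2_def h_def hl_def ..
    finally show ?thesis by simp
  qed
  have t1: "(T1 \<longlongrightarrow> 0) (netF \<Lambda> R)" unfolding T1_def
    using mkn hb by (intro conv_bounded[OF P dir mk _ cvk hm]) auto
  have t2: "(T2 \<longlongrightarrow> 0) (netF \<Lambda> R)" unfolding T2_def by (rule one_sided_tendsto[OF dir cvkk B])
  have t3: "(T3 \<longlongrightarrow> 0) (netF \<Lambda> R)" unfolding T3_def by (rule one_sided_tendsto[OF dir cvj B])
  have "((\<lambda>l. T1 l + T2 l + T3 l) \<longlongrightarrow> 0 + 0 + 0) (netF \<Lambda> R)" by (intro tendsto_add t1 t2 t3)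
  then have "G \<le> 0 + 0 + 0"
    using netF_in[OF dir] bound
    by (intro tendsto_le[OF netF_nontriv[OF dir] _ tendsto_const]) (auto elim: eventually_mono)
  moreover have "0 \<le> G" unfolding G_def by simp
  ultimately have G0: "G = 0" by simp
  have i1: "integrable p (\<lambda>x. \<bar>a x - b x\<bar>)"
    using b_a_b by (intro prob_integrable_bound[OF P, where c=2]) auto
  have "AE x in p. \<bar>a x - b x\<bar> = 0"
    using G0 unfolding G_def by (subst (asm) integral_nonneg_eq_0_iff_AE[OF i1]) auto
  then show ?thesis by (rule AE_mp) (auto simp: a_def b_def h_def intro!: AE_I2)
qed




lemma ae_comp_iff:
  assumes "markov_kernel p h" "markov_kernel p k" "B \<in> sets p"
  shows "(AE x in p. measure (kcomp h k x) B = measure (j x) B) \<longleftrightarrow>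
         (AE x in p. (\<integral>y. measure (h y) B \<partial>k x) = measure (j x) B)"
  using mk_comp[OF assms(1,2) _ assms(3)] by (intro AE_cong) simp

theorem proposition5p11:
  fixes p :: "'a::polish_space measure"
    and \<Lambda> :: "'i set" and R :: "'i \<Rightarrow> 'i \<Rightarrow> bool"
    and en fn :: "'i \<Rightarrow> 'a \<Rightarrow> 'a measure" and e f :: "'a \<Rightarrow> 'a measure"
  assumes "prob_space p" and "sets p = sets borel"
    and "directed_set \<Lambda> R"
    and "\<And>l. l \<in> \<Lambda> \<Longrightarrow> markov_kernel p (en l) \<and> kernel_measure_preserving p (en l) \<and> kernel_idempotent p (en l)"
    and "\<And>l. l \<in> \<Lambda> \<Longrightarrow> markov_kernel p (fn l) \<and> kernel_measure_preserving p (fn l) \<and> kernel_idempotent p (fn l)"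
    and "markov_kernel p e" and "markov_kernel p f"
    and "one_sided_conv p \<Lambda> R en e" and "one_sided_conv p \<Lambda> R fn f"
    and "\<And>l. l \<in> \<Lambda> \<Longrightarrow> kernel_le p (en l) (fn l)"
  shows "kernel_le p e f"
  unfolding kernel_le_def kernel_ae_eq_def
proof (intro conjI ballI)
  fix B assume B: "B \<in> sets p"
  have men: "markov_kernel p (en l)" "kernel_measure_preserving p (en l)" if "l \<in> \<Lambda>" for l
    using assms(4)[OF that] by auto
  have mfn: "markov_kernel p (fn l)" "kernel_measure_preserving p (fn l)" if "l \<in> \<Lambda>" for l
    using assms(5)[OF that] by auto
  have le1: "AE x in p. (\<integral>y. measure (en l y) B \<partial>fn l x) = measure (en l x) B" if l: "l \<in> \<Lambda>" for l
    using assms(10)[OF l] B unfolding kernel_le_def kernel_ae_eq_def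
    by (subst ae_comp_iff[OF men(1)[OF l] mfn(1)[OF l] B, symmetric]) blast
  have le2: "AE x in p. (\<integral>y. measure (fn l y) B \<partial>en l x) = measure (en l x) B" if l: "l \<in> \<Lambda>" for l
    using assms(10)[OF l] B unfolding kernel_le_def kernel_ae_eq_def
    by (subst ae_comp_iff[OF mfn(1)[OF l] men(1)[OF l] B, symmetric]) blast
  have "AE x in p. (\<integral>y. measure (e y) B \<partial>f x) = measure (e x) B"
    by (rule main_ae[OF assms(1,3) B assms(7,6,6,9,8,8)]) (use mfn men le1 in auto)
  then show "AE x in p. measure (kcomp e f x) B = measure (e x) B"
    by (subst ae_comp_iff[OF assms(6,7) B])
  have "AE x in p. (\<integral>y. measure (f y) B \<partial>e x) = measure (e x) B"
    by (rule main_ae[OF assms(1,3) B assms(6,7,6,8,9,8)]) (use mfn men le2 in auto)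
  then show "AE x in p. measure (kcomp f e x) B = measure (e x) B"
    by (subst ae_comp_iff[OF assms(7,6) B])
qed


end
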